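(* Let $Z$ be a smooth $l$-dimensional toric variety whose fan contains two $l$-dimensional cones $\sigma_+=\mathrm{cone}(v_1,\dots,v_{l-1},v_+)$ and $\sigma_-=\mathrm{cone}(v_1,\dots,v_{l-1},v_-)$ (with $v_1,\dots,v_{l-1},v_\pm$ primitive) such that $\sigma_+\cap\sigma_-$ has dimension $l-1$ and $\sigma_+\cup\sigma_-$ is strictly convex. Assume moreover that the piecewise linear function $k$ associated to the anticanonical bundle of $Z$ is not strictly convex on $\sigma_+\cup\sigma_-$, i.e. $k_{\sigma_+}(v_-)\ge 1$, where $k_{\sigma_+}$ is the linear function coinciding with $k$ on $\sigma_+$. Then the anticanonical bundle of any toric variety obtained from $Z$ by a sequence of blow-ups centred in torus-fixed points is not ample.
   Context: Toric varieties are for a torus $S$ with cocharacter lattice $\chi_*(S)$; the fan lives in $\chi_*(S)_{\mathbb{R}}$. The piecewise linear function $k$ associated to the anticanonical bundle is the function on the support of the fan, linear on each cone, with $k(v)=1$ for every primitive ray generator $v$; the anticanonical bundle is ample iff for each maximal cone $C$ and each primitive ray generator $v\notin C$ one has $k_C(v)<1$. A blow-up at a torus-fixed point corresponds to star subdivision of a maximal cone at the sum of its generators. *)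

theory Defs
  imports "HOL-Analysis.Analysis"
begin

text \<open>The cocharacter lattice is identified with the integer points of
  real^'n, so the dimension l of the toric variety is CARD('n).
  A cone of a smooth fan is represented by the finite set of its primitive
  ray generators.\<close>

definition lattice_vec :: "real ^ 'n \<Rightarrow> bool" where
  "lattice_vec v \<longleftrightarrow> (\<forall>i. v $ i \<in> \<int>)"

definition primitive :: "real ^ 'n \<Rightarrow> bool" where
  "primitive v \<longleftrightarrow> lattice_vec v \<and> v \<noteq> 0 \<and>
     (\<forall>(k::nat) w. lattice_vec w \<and> v = of_nat k *\<^sub>R w \<longrightarrow> k = 1)"

definition gen_cone :: "(real ^ 'n) set \<Rightarrow> (real ^ 'n) set" where
  "gen_cone S = {x. \<exists>c. (\<forall>v\<in>S. c v \<ge> 0) \<and> x = (\<Sum>v\<in>S. c v *\<^sub>R v)}"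

definition unimodular :: "(real ^ 'n) set \<Rightarrow> bool" where
  "unimodular S \<longleftrightarrow> (\<exists>B. S \<subseteq> B \<and> finite B \<and> card B = CARD('n) \<and> (\<forall>b\<in>B. lattice_vec b) \<and>
      (\<forall>x. lattice_vec x \<longrightarrow> (\<exists>c::real^'n \<Rightarrow> int. x = (\<Sum>b\<in>B. of_int (c b) *\<^sub>R b))))"

definition smooth_fan :: "(real ^ 'n) set set \<Rightarrow> bool" where
  "smooth_fan \<Sigma> \<longleftrightarrow> finite \<Sigma> \<and> {} \<in> \<Sigma> \<and>
     (\<forall>S\<in>\<Sigma>. finite S \<and> (\<forall>v\<in>S. primitive v) \<and> unimodular S) \<and>
     (\<forall>S\<in>\<Sigma>. \<forall>T. T \<subseteq> S \<longrightarrow> T \<in> \<Sigma>) \<and>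
     (\<forall>S\<in>\<Sigma>. \<forall>T\<in>\<Sigma>. gen_cone S \<inter> gen_cone T = gen_cone (S \<inter> T))"

definition rays :: "(real ^ 'n) set set \<Rightarrow> (real ^ 'n) set" where
  "rays \<Sigma> = {v. {v} \<in> \<Sigma>}"

definition maximal_cone :: "(real ^ 'n) set set \<Rightarrow> (real ^ 'n) set \<Rightarrow> bool" where
  "maximal_cone \<Sigma> C \<longleftrightarrow> C \<in> \<Sigma> \<and> \<not> (\<exists>D\<in>\<Sigma>. C \<subset> D)"

text \<open>The linear function k_C (as a vector y, k_C(x) = y \<bullet> x) coinciding with the
  anticanonical piecewise linear function k on a full-dimensional cone C.\<close>
definition kC :: "(real ^ 'n) set \<Rightarrow> real ^ 'n \<Rightarrow> real" where
  "kC C x = (THE y. \<forall>v\<in>C. y \<bullet> v = 1) \<bullet> x"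

text \<open>Ampleness criterion for the anticanonical bundle: for each maximal cone C
  the linear function agreeing with k on C (k = 1 on its generators) is < 1 on
  all primitive ray generators outside C.\<close>
definition anticanonical_ample :: "(real ^ 'n) set set \<Rightarrow> bool" where
  "anticanonical_ample \<Sigma> \<longleftrightarrow>
     (\<forall>C. maximal_cone \<Sigma> C \<longrightarrow>
        (\<exists>y::real^'n. (\<forall>v\<in>C. y \<bullet> v = 1) \<and> (\<forall>v\<in>rays \<Sigma> - C. y \<bullet> v < 1)))"

text \<open>Blow-up at the torus-fixed point of the l-dimensional cone S:
  star subdivision of S at the sum of its generators.\<close>
definition star_subdivision :: "(real ^ 'n) set set \<Rightarrow> (real ^ 'n) set \<Rightarrow> (real ^ 'n) set set" where
  "star_subdivision \<Sigma> S =
     {T\<in>\<Sigma>. \<not> S \<subseteq> T} \<union> {insert (\<Sum>v\<in>S. v) T | T. T \<subset> S}"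

definition blowup_step :: "(real ^ 'n) set set \<Rightarrow> (real ^ 'n) set set \<Rightarrow> bool" where
  "blowup_step \<Sigma> \<Sigma>' \<longleftrightarrow>
     (\<exists>S. S \<in> \<Sigma> \<and> card S = CARD('n) \<and> \<Sigma>' = star_subdivision \<Sigma> S)"

abbreviation blowup_seq :: "(real ^ 'n) set set \<Rightarrow> (real ^ 'n) set set \<Rightarrow> bool" where
  "blowup_seq \<equiv> blowup_step\<^sup>*\<^sup>*"

end

theory Submission
  imports Defs
begin

definition good :: "(real ^ 'n) set set \<Rightarrow> bool" where
  "good \<Sigma> \<longleftrightarrow> (\<forall>T\<in>\<Sigma>. finite T \<and> card T \<le> CARD('n)) \<and>
    (\<exists>a W b (\<alpha>::real) c. a \<notin> W \<and> finite W \<and> card W = CARD('n) - 1 \<and> insert a W \<in> \<Sigma> \<and>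
       {b} \<in> \<Sigma> \<and> b \<notin> insert a W \<and> independent (insert a W) \<and> \<alpha> \<le> 0 \<and>
       \<alpha> + sum c W \<ge> 1 \<and> b = \<alpha> *\<^sub>R a + (\<Sum>u\<in>W. c u *\<^sub>R u))"

lemma card_pos: "CARD('n::finite) \<ge> 1"
  using finite_UNIV_card_ge_0[where 'a='n] by simp

lemma good_not_ample:
  fixes \<Sigma> :: "(real ^ 'n) set set"
  assumes "good \<Sigma>"
  shows "\<not> anticanonical_ample \<Sigma>"
proof
  assume amp: "anticanonical_ample \<Sigma>"
  from assms obtain a W b \<alpha> c where cb: "\<forall>T\<in>\<Sigma>. finite T \<and> card T \<le> CARD('n)"
    and h: "a \<notin> W" "finite W" "card W = CARD('n) - 1" "insert a W \<in> \<Sigma>"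
       "{b} \<in> \<Sigma>" "b \<notin> insert a W" "\<alpha> + sum c W \<ge> 1" "b = \<alpha> *\<^sub>R a + (\<Sum>u\<in>W. c u *\<^sub>R u)"
    unfolding good_def by blast
  have cA: "card (insert a W) = CARD('n)" using h card_pos[where 'n='n] by simp
  have "maximal_cone \<Sigma> (insert a W)"
    unfolding maximal_cone_def
  proof (intro conjI notI)
    show "insert a W \<in> \<Sigma>" by fact
    assume "\<exists>D\<in>\<Sigma>. insert a W \<subset> D"
    then obtain D where D: "D \<in> \<Sigma>" "insert a W \<subset> D" by blast
    then have "card (insert a W) < card D" using cb by (meson psubset_card_mono)
    with cb D cA show False by fastforce
  qed
  with amp obtain y where y: "\<forall>v\<in>insert a W. y \<bullet> v = 1" "\<forall>v\<in>rays \<Sigma> - insert a W. y \<bullet> v < 1"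
    unfolding anticanonical_ample_def by blast
  have "b \<in> rays \<Sigma> - insert a W" using h unfolding rays_def by auto
  with y have "y \<bullet> b < 1" by blast
  moreover have "y \<bullet> b = \<alpha> + sum c W"
    using y(1) by (simp add: h(8) inner_add_right inner_sum_right)
  ultimately show False using h by linarith
qed

lemma ray_keep:
  fixes \<Sigma> :: "(real ^ 'n) set set"
  assumes "{b} \<in> \<Sigma>" "card S = CARD('n)"
  shows "{b} \<in> star_subdivision \<Sigma> S"
proof (cases "S \<subseteq> {b}")
  case False then show ?thesis using assms unfolding star_subdivision_def by auto
next
  case True
  have "S \<noteq> {}" using assms(2) card_pos[where 'n='n] by auto
  with True have S: "S = {b}" by auto
  have "{b} = insert (\<Sum>v\<in>S. v) {} \<and> {} \<subset> S" using S by auto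
  then show ?thesis unfolding star_subdivision_def by blast
qed

lemma good_step:
  fixes \<Sigma> :: "(real ^ 'n) set set"
  assumes g: "good \<Sigma>" and st: "blowup_step \<Sigma> \<Sigma>'"
  shows "good \<Sigma>'"
proof -
  from st obtain S where S: "S \<in> \<Sigma>" "card S = CARD('n)" "\<Sigma>' = star_subdivision \<Sigma> S"
    unfolding blowup_step_def by blast
  have finS: "finite S" using S(2) card_pos[where 'n='n] by (metis card.infinite not_one_le_zero)
  from g obtain a W b \<alpha> c where cb: "\<forall>T\<in>\<Sigma>. finite T \<and> card T \<le> CARD('n)"
    and h: "a \<notin> W" "finite W" "card W = CARD('n) - 1" "insert a W \<in> \<Sigma>"
       "{b} \<in> \<Sigma>" "b \<notin> insert a W" "independent (insert a W)" "\<alpha> \<le> 0" "\<alpha> + sum c W \<ge> 1"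
       "b = \<alpha> *\<^sub>R a + (\<Sum>u\<in>W. c u *\<^sub>R u)"
    unfolding good_def by blast
  have cA: "card (insert a W) = CARD('n)" using h card_pos[where 'n='n] by simp
  have cb': "\<forall>T\<in>\<Sigma>'. finite T \<and> card T \<le> CARD('n)"
  proof
    fix T assume "T \<in> \<Sigma>'"
    then consider "T \<in> \<Sigma>" | T0 where "T = insert (\<Sum>v\<in>S. v) T0" "T0 \<subset> S"
      using S(3) unfolding star_subdivision_def by blast
    then show "finite T \<and> card T \<le> CARD('n)"
    proof cases
      case 1 then show ?thesis using cb by blast
    next
      case 2
      have "finite T0" using 2 finS by (meson finite_subset psubset_imp_subset)
      moreover have "card T0 < card S" using 2 finS by (simp add: psubset_card_mono)
      ultimately show ?thesis using 2 S(2) by (simp add: card_insert_if)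
    qed
  qed
  have bray: "{b} \<in> \<Sigma>'" using ray_keep[OF h(5) S(2)] S(3) by simp
  show ?thesis
  proof (cases "S = insert a W")
    case False
    have "\<not> S \<subseteq> insert a W"
    proof
      assume "S \<subseteq> insert a W"
      then have "S = insert a W" using card_subset_eq[of "insert a W" S] h(2) S(2) cA by simp
      with False show False by simp
    qed
    then have "insert a W \<in> \<Sigma>'" using h(4) S(3) unfolding star_subdivision_def by blast
    then show ?thesis unfolding good_def using cb' bray h by blast
  next
    case True
    define w where "w = a + (\<Sum>u\<in>W. u)"
    have wS: "w = (\<Sum>v\<in>S. v)" using True h(1,2) by (simp add: w_def)
    have aspan: "a \<notin> span W" and indW: "independent W" using h(7) h(1) by (simp_all add: independent_insert)
    have "w \<notin> span W"
    proof
      assume "w \<in> span W"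
      moreover have "(\<Sum>u\<in>W. u) \<in> span W" by (rule span_sum) (rule span_base)
      ultimately have "w - (\<Sum>u\<in>W. u) \<in> span W" by (rule span_diff)
      then show False using aspan by (simp add: w_def)
    qed
    then have wW: "w \<notin> W" using span_base by blast
    have indw: "independent (insert w W)"
      using indW wW \<open>w \<notin> span W\<close> by (simp add: independent_insert)
    have bw: "b \<noteq> w"
    proof
      assume "b = w"
      then have "(1 - \<alpha>) *\<^sub>R a = (\<Sum>u\<in>W. c u *\<^sub>R u) - (\<Sum>u\<in>W. u)"
        using h(10) unfolding w_def by (simp add: algebra_simps)
      then have "(1 - \<alpha>) *\<^sub>R a \<in> span W"
      proof -
        have "(\<Sum>u\<in>W. c u *\<^sub>R u) \<in> span W" by (intro span_sum span_scale span_base)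
        moreover have "(\<Sum>u\<in>W. u) \<in> span W" by (rule span_sum) (rule span_base)
        ultimately show ?thesis using \<open>(1 - \<alpha>) *\<^sub>R a = _\<close> by (simp add: span_diff)
      qed
      then have "inverse (1 - \<alpha>) *\<^sub>R ((1 - \<alpha>) *\<^sub>R a) \<in> span W" by (rule span_scale)
      then have "a \<in> span W" using h(8) by simp
      then show False using aspan by simp
    qed
    have memb: "insert w W \<in> \<Sigma>'"
    proof -
      have "W \<subset> S" using True h(1) by auto
      then show ?thesis using S(3) wS unfolding star_subdivision_def by blast
    qed
    define c' where "c' u = c u - \<alpha>" for u
    have sum1: "\<alpha> + sum c' W \<ge> 1"
    proof -
      have "sum c' W = sum c W - real (card W) * \<alpha>" by (simp add: c'_def sum_subtractf)
      moreover have "real (card W) * \<alpha> \<le> 0" using h(8) by (simp add: mult_nonneg_nonpos)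
      ultimately show ?thesis using h(9) by linarith
    qed
    have rep: "b = \<alpha> *\<^sub>R w + (\<Sum>u\<in>W. c' u *\<^sub>R u)"
      unfolding h(10) w_def c'_def
      by (simp add: scaleR_right.sum scaleR_left_diff_distrib sum_subtractf algebra_simps)
    show ?thesis unfolding good_def
      using cb' wW h(2,3) memb bray bw h(6) indw h(8) sum1 rep by blast
  qed
qed

lemma good_init:
  fixes \<Sigma> :: "(real ^ 'n) set set"
    and V :: "(real ^ 'n) set"
    and vp vm :: "real ^ 'n"
  assumes fan: "smooth_fan \<Sigma>"
    and V_card: "finite V" "card V = CARD('n) - 1"
    and notin: "vp \<notin> V" "vm \<notin> V" "vp \<noteq> vm"
    and sp: "insert vp V \<in> \<Sigma>"
    and sm: "insert vm V \<in> \<Sigma>"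
    and not_convex: "kC (insert vp V) vm \<ge> 1"
  shows "good \<Sigma>"
proof -
  define A where "A = insert vp V"
  have finA: "finite A" using V_card by (simp add: A_def)
  have cA: "card A = CARD('n)" using V_card notin card_pos[where 'n='n] by (simp add: A_def)
  have cb: "\<forall>T\<in>\<Sigma>. finite T \<and> card T \<le> CARD('n)"
  proof
    fix T assume T: "T \<in> \<Sigma>"
    then have "finite T" "unimodular T" using fan unfolding smooth_fan_def by auto
    then obtain B where "T \<subseteq> B" "finite B" "card B = CARD('n)" unfolding unimodular_def by blast
    then show "finite T \<and> card T \<le> CARD('n)" using \<open>finite T\<close> by (metis card_mono)
  qed
  have "unimodular A" using fan sp unfolding smooth_fan_def A_def by auto
  then obtain B where B: "A \<subseteq> B" "finite B" "card B = CARD('n)"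
    "\<forall>x. lattice_vec x \<longrightarrow> (\<exists>c::real^'n \<Rightarrow> int. x = (\<Sum>b\<in>B. of_int (c b) *\<^sub>R b))"
    unfolding unimodular_def by blast
  have AB: "A = B" using card_subset_eq[OF B(2,1)] B(3) cA by simp
  have latspan: "x \<in> span A" if lx: "lattice_vec x" for x
  proof -
    obtain c :: "real^'n \<Rightarrow> int" where "x = (\<Sum>b\<in>A. of_int (c b) *\<^sub>R b)" using B(4) lx AB by blast
    then show ?thesis
      apply (simp only:) apply (rule span_sum) apply (rule span_scale) apply (rule span_base) by assumption
  qed
  have "Basis \<subseteq> span A"
  proof
    fix x :: "real^'n" assume "x \<in> Basis"
    then obtain i where x: "x = axis i 1" unfolding Basis_vec_def by auto
    have "lattice_vec x" unfolding lattice_vec_def x axis_def by auto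
    then show "x \<in> span A" by (rule latspan)
  qed
  then have spanA: "span A = UNIV" using span_mono[OF \<open>Basis \<subseteq> span A\<close>] by (simp add: span_span top.extremum_unique)
  have indA: "independent A"
    using card_eq_dim[of A UNIV] finA cA spanA by simp
  obtain u where u: "vm = (\<Sum>x\<in>A. u x *\<^sub>R x)" using span_finite[OF finA] spanA by blast
  have vmrep: "vm = u vp *\<^sub>R vp + (\<Sum>v\<in>V. u v *\<^sub>R v)"
    using u notin V_card by (simp add: A_def)
  obtain g where g: "linear g" "\<forall>x\<in>A. g x = (1::real)"
    using linear_independent_extend[OF indA, of "\<lambda>_. 1::real"] by blast
  define Y where "Y = adjoint g 1"
  have Y1: "\<forall>v\<in>A. Y \<bullet> v = 1"
    using g adjoint_works[OF g(1)] by (simp add: Y_def inner_commute)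
  have Yuniq: "y = Y" if "\<forall>v\<in>A. y \<bullet> v = 1" for y
  proof -
    have "orthogonal (y - Y) z" for z
    proof -
      have "z \<in> span A" using spanA by simp
      then show ?thesis
        by (rule orthogonal_to_span) (use that Y1 in \<open>auto simp: orthogonal_def inner_diff_left\<close>)
    qed
    then have "orthogonal (y - Y) (y - Y)" by blast
    then show ?thesis by (simp add: orthogonal_def)
  qed
  have "(THE y. \<forall>v\<in>A. y \<bullet> v = 1) = Y"
    using Y1 Yuniq by (rule the_equality)
  then have "kC A vm = Y \<bullet> vm" by (simp add: kC_def)
  also have "\<dots> = (\<Sum>x\<in>A. u x)" using Y1 by (simp add: u inner_sum_right)
  also have "\<dots> = u vp + sum u V" using notin V_card by (simp add: A_def)
  finally have ksum: "u vp + sum u V \<ge> 1" using not_convex by (simp add: A_def)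
  have neg: "u vp \<le> 0"
  proof (rule ccontr)
    assume pos: "\<not> u vp \<le> 0"
    define x where "x = vm + (\<Sum>v\<in>V. \<bar>u v\<bar> *\<^sub>R v)"
    have x1: "x \<in> gen_cone A"
      unfolding gen_cone_def
    proof (intro CollectI exI[of _ "\<lambda>z. if z = vp then u vp else u z + \<bar>u z\<bar>"] conjI ballI)
      fix v assume "v \<in> A" then show "0 \<le> (if v = vp then u vp else u v + \<bar>u v\<bar>)" using pos by auto
    next
      have "(\<Sum>v\<in>V. (if v = vp then u vp else u v + \<bar>u v\<bar>) *\<^sub>R v) = (\<Sum>v\<in>V. (u v + \<bar>u v\<bar>) *\<^sub>R v)"
        using notin by (intro sum.cong) auto
      also have "\<dots> = (\<Sum>v\<in>V. u v *\<^sub>R v) + (\<Sum>v\<in>V. \<bar>u v\<bar> *\<^sub>R v)"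
        by (simp add: scaleR_add_left sum.distrib)
      finally show "x = (\<Sum>v\<in>A. (if v = vp then u vp else u v + \<bar>u v\<bar>) *\<^sub>R v)"
        using notin V_card by (simp add: A_def x_def vmrep)
    qed
    have x2: "x \<in> gen_cone (insert vm V)"
      unfolding gen_cone_def
    proof (intro CollectI exI[of _ "\<lambda>z. if z = vm then 1 else \<bar>u z\<bar>"] conjI ballI)
      fix v assume "v \<in> insert vm V" then show "0 \<le> (if v = vm then 1 else \<bar>u v\<bar>)" by auto
    next
      have "(\<Sum>v\<in>V. (if v = vm then 1 else \<bar>u v\<bar>) *\<^sub>R v) = (\<Sum>v\<in>V. \<bar>u v\<bar> *\<^sub>R v)"
        using notin by (intro sum.cong) auto
      then show "x = (\<Sum>v\<in>insert vm V. (if v = vm then 1 else \<bar>u v\<bar>) *\<^sub>R v)"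
        using notin V_card by (simp add: x_def)
    qed
    have fi: "\<forall>S\<in>\<Sigma>. \<forall>T\<in>\<Sigma>. gen_cone S \<inter> gen_cone T = gen_cone (S \<inter> T)"
      using fan unfolding smooth_fan_def by (elim conjE) assumption
    have "gen_cone A \<inter> gen_cone (insert vm V) = gen_cone (A \<inter> insert vm V)"
      using fi sp sm unfolding A_def by simp
    moreover have "A \<inter> insert vm V = V" using notin by (auto simp: A_def)
    ultimately have "x \<in> gen_cone V" using x1 x2 by auto
    then obtain d where d: "x = (\<Sum>v\<in>V. d v *\<^sub>R v)" unfolding gen_cone_def by blast
    define e where "e z = (if z = vp then u vp else u z + \<bar>u z\<bar> - d z)" for z
    have "(\<Sum>z\<in>A. e z *\<^sub>R z) = u vp *\<^sub>R vp + (\<Sum>v\<in>V. (u v + \<bar>u v\<bar> - d v) *\<^sub>R v)"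
    proof -
      have "(\<Sum>v\<in>V. e v *\<^sub>R v) = (\<Sum>v\<in>V. (u v + \<bar>u v\<bar> - d v) *\<^sub>R v)"
        using notin by (intro sum.cong) (auto simp: e_def)
      then show ?thesis using notin V_card by (simp add: A_def e_def)
    qed
    also have "\<dots> = u vp *\<^sub>R vp + (\<Sum>v\<in>V. u v *\<^sub>R v) + (\<Sum>v\<in>V. \<bar>u v\<bar> *\<^sub>R v) - (\<Sum>v\<in>V. d v *\<^sub>R v)"
      by (simp add: scaleR_add_left scaleR_diff_left sum.distrib sum_subtractf)
    also have "\<dots> = 0" using d by (simp add: x_def vmrep)
    finally have "(\<Sum>z\<in>A. e z *\<^sub>R z) = 0" .
    moreover have "e vp \<noteq> 0" "vp \<in> A" using pos by (auto simp: e_def A_def)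
    ultimately have "dependent A" using dependent_finite[OF finA] by blast
    then show False using indA by simp
  qed
  have sc: "\<forall>S\<in>\<Sigma>. \<forall>T. T \<subseteq> S \<longrightarrow> T \<in> \<Sigma>"
    using fan unfolding smooth_fan_def by (elim conjE) assumption
  have vmr: "{vm} \<in> \<Sigma>" using sc sm by simp
  show ?thesis unfolding good_def
    apply (rule conjI[OF cb])
    apply (rule exI[where x=vp], rule exI[where x=V], rule exI[where x=vm], rule exI[where x="u vp"], rule exI[where x=u])
    using vmr notin V_card sp indA neg ksum vmrep unfolding A_def by auto
qed

theorem lemma3p1:
  fixes \<Sigma> :: "(real ^ 'n) set set"
    and V :: "(real ^ 'n) set"
    and vp vm :: "real ^ 'n"
  assumes fan: "smooth_fan \<Sigma>"
    and V_card: "finite V" "card V = CARD('n) - 1"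
    and prim: "\<forall>v\<in>V. primitive v" "primitive vp" "primitive vm"
    and notin: "vp \<notin> V" "vm \<notin> V" "vp \<noteq> vm"
    and sp: "insert vp V \<in> \<Sigma>"
    and sm: "insert vm V \<in> \<Sigma>"
    and inter_dim: "aff_dim (gen_cone (insert vp V) \<inter> gen_cone (insert vm V)) = int CARD('n) - 1"
    and union_convex: "convex (gen_cone (insert vp V) \<union> gen_cone (insert vm V))"
    and union_strict: "\<forall>x. x \<in> gen_cone (insert vp V) \<union> gen_cone (insert vm V) \<and>
                            - x \<in> gen_cone (insert vp V) \<union> gen_cone (insert vm V) \<longrightarrow> x = 0"
    and not_convex: "kC (insert vp V) vm \<ge> 1"
  shows "\<forall>\<Sigma>'. blowup_seq \<Sigma> \<Sigma>' \<longrightarrow> \<not> anticanonical_ample \<Sigma>'"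
proof (intro allI impI)
  fix \<Sigma>' assume "blowup_seq \<Sigma> \<Sigma>'"
  then have "good \<Sigma>'"
  proof induction
    case base
    show ?case using good_init[OF fan V_card notin sp sm not_convex] .
  next
    case (step y z)
    then show ?case using good_step by blast
  qed
  then show "\<not> anticanonical_ample \<Sigma>'" by (rule good_not_ample)
qed

end
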